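(* If $G^c$ is a connected vertex-coloured graph with $n$ vertices and $c$ colours, where $n>c\ge1$, then $\gamma^t(G^c)\le \frac{n+c-1}{2}$.
   Context: A vertex-coloured graph $G^c$ with colour set $\{1,\dots,c\}$ is a finite simple graph in which every vertex receives exactly one colour and every colour appears on at least one vertex. A dominating set is tropical if every colour appears on at least one of its vertices; $\gamma^t(G^c)$ is the minimum size of a tropical dominating set. *)

theory Defs
  imports Complex_Main
begin

definition simple_graph :: "'a set \<Rightarrow> ('a \<Rightarrow> 'a \<Rightarrow> bool) \<Rightarrow> bool" where
  "simple_graph V E \<longleftrightarrow> finite V \<and> (\<forall>u v. E u v \<longrightarrow> u \<in> V \<and> v \<in> V)
     \<and> (\<forall>u v. E u v \<longrightarrow> E v u) \<and> (\<forall>v. \<not> E v v)"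

definition connected_graph :: "'a set \<Rightarrow> ('a \<Rightarrow> 'a \<Rightarrow> bool) \<Rightarrow> bool" where
  "connected_graph V E \<longleftrightarrow> V \<noteq> {} \<and> (\<forall>u\<in>V. \<forall>v\<in>V. E\<^sup>*\<^sup>* u v)"

definition vertex_colouring :: "'a set \<Rightarrow> ('a \<Rightarrow> nat) \<Rightarrow> nat \<Rightarrow> bool" where
  "vertex_colouring V col c \<longleftrightarrow> col ` V = {1..c}"

definition dominating_set :: "'a set \<Rightarrow> ('a \<Rightarrow> 'a \<Rightarrow> bool) \<Rightarrow> 'a set \<Rightarrow> bool" where
  "dominating_set V E D \<longleftrightarrow> D \<subseteq> V \<and> (\<forall>v\<in>V. v \<in> D \<or> (\<exists>u\<in>D. E u v))"

definition tropical_dominating_set ::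
  "'a set \<Rightarrow> ('a \<Rightarrow> 'a \<Rightarrow> bool) \<Rightarrow> ('a \<Rightarrow> nat) \<Rightarrow> nat \<Rightarrow> 'a set \<Rightarrow> bool" where
  "tropical_dominating_set V E col c D \<longleftrightarrow> dominating_set V E D \<and> {1..c} \<subseteq> col ` D"

definition tropical_domination_number ::
  "'a set \<Rightarrow> ('a \<Rightarrow> 'a \<Rightarrow> bool) \<Rightarrow> ('a \<Rightarrow> nat) \<Rightarrow> nat \<Rightarrow> nat" where
  "tropical_domination_number V E col c =
     (LEAST k. \<exists>D. tropical_dominating_set V E col c D \<and> card D = k)"

end

theory Submission
  imports Defs
begin

definition dst :: "('a \<Rightarrow> 'a \<Rightarrow> bool) \<Rightarrow> 'a \<Rightarrow> 'a \<Rightarrow> nat" where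
  "dst E r v = (LEAST k. (E ^^ k) r v)"

lemma dst_I: "(E ^^ k) r v \<Longrightarrow> (E ^^ dst E r v) r v \<and> dst E r v \<le> k"
  unfolding dst_def by (metis LeastI Least_le)

lemma dst_edge: "(E ^^ k) r x \<Longrightarrow> E x y \<Longrightarrow> dst E r y \<le> Suc (dst E r x)"
proof -
  assume a: "(E ^^ k) r x" "E x y"
  have "(E ^^ dst E r x) r x" using dst_I[OF a(1)] by simp
  hence "(E ^^ Suc (dst E r x)) r y" using a(2) by (rule relpowp_Suc_I)
  thus ?thesis using dst_I[where E=E and k="Suc (dst E r x)" and r=r and v=y] by blast
qed

lemma dst_parent:
  assumes "(E ^^ k) r y" "dst E r y = Suc j"
  shows "\<exists>p. E p y \<and> (E ^^ j) r p \<and> dst E r p = j"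
proof -
  have "(E ^^ Suc j) r y" using dst_I[OF assms(1)] assms(2) by simp
  then obtain p where p: "(E ^^ j) r p" "E p y" by (rule relpowp_Suc_E)
  have "dst E r p \<le> j" using dst_I[OF p(1)] by simp
  moreover have "Suc j \<le> Suc (dst E r p)" using dst_edge[OF p(1) p(2)] assms(2) by simp
  ultimately show ?thesis using p by auto
qed

lemma dst0: "(E ^^ k) r y \<Longrightarrow> dst E r y = 0 \<Longrightarrow> y = r"
  using dst_I[where E=E and k=k and r=r and v=y] by (auto elim: relpowp_0_E)

lemma rtranclp_sym: "(\<And>x y. R x y \<Longrightarrow> R y x) \<Longrightarrow> R\<^sup>*\<^sup>* a b \<Longrightarrow> R\<^sup>*\<^sup>* b a"
proof -
  assume s: "\<And>x y. R x y \<Longrightarrow> R y x" and h: "R\<^sup>*\<^sup>* a b"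
  from h show "R\<^sup>*\<^sup>* b a"
    by (induction rule: rtranclp_induct) (auto intro: converse_rtranclp_into_rtranclp s)
qed

definition restr :: "('a \<Rightarrow> 'a \<Rightarrow> bool) \<Rightarrow> 'a set \<Rightarrow> 'a \<Rightarrow> 'a \<Rightarrow> bool" where
  "restr E W = (\<lambda>x y. E x y \<and> x \<in> W \<and> y \<in> W)"

lemma simple_restr: "simple_graph V E \<Longrightarrow> W \<subseteq> V \<Longrightarrow> simple_graph W (restr E W)"
  unfolding simple_graph_def restr_def by (auto intro: finite_subset)

lemma reps:
  assumes "C \<subseteq> col ` V" "finite V"
  shows "\<exists>R \<subseteq> V. col ` R = C \<and> card R \<le> card C"
proof -
  have "\<forall>c\<in>C. \<exists>v\<in>V. col v = c" using assms(1) by auto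
  then obtain f where f: "\<forall>c\<in>C. f c \<in> V \<and> col (f c) = c" by metis
  have "col ` (f ` C) = C" using f by (force simp: image_image)
  moreover have "finite C" using assms finite_surj by blast
  ultimately show ?thesis using f by (intro exI[of _ "f ` C"]) (auto intro: card_image_le)
qed

lemma neighbour:
  assumes "simple_graph V E" "connected_graph V E" "card V \<ge> 2" "x \<in> V"
  shows "\<exists>y. E x y"
proof -
  have "finite V" using assms(1) simple_graph_def by auto
  have "card (V - {x}) \<ge> 1" using assms(3,4) \<open>finite V\<close> by simp
  then obtain y where "y \<in> V - {x}" by (metis card.empty ex_in_conv not_one_le_zero)
  hence y: "y \<in> V" "y \<noteq> x" by auto
  have "E\<^sup>*\<^sup>* x y" using assms(2,4) y(1) unfolding connected_graph_def by blast
  thus ?thesis using y(2) by (metis converse_rtranclpE)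
qed

lemma star_case:
  assumes sg: "simple_graph V E" and x: "x \<in> V" "\<forall>y\<in>V. y \<noteq> x \<longrightarrow> E x y"
    and lt: "card (col ` V) < card V"
  shows "\<exists>D. dominating_set V E D \<and> col ` D = col ` V \<and> 2 * card D + 1 \<le> card V + card (col ` V)"
proof -
  have fin: "finite V" using sg simple_graph_def by auto
  obtain R where R: "R \<subseteq> V" "col ` R = col ` V - {col x}" "card R \<le> card (col ` V - {col x})"
    using reps[of "col ` V - {col x}" col V] fin by auto
  have cx: "card (col ` V - {col x}) = card (col ` V) - 1" using x fin by simp
  have pos: "card (col ` V) \<ge> 1" using x fin by (metis card_0_eq empty_iff finite_imageI imageI less_one not_le)
  have fR: "finite R" using R(1) fin finite_subset by auto
  let ?D = "insert x R"
  have "card ?D \<le> Suc (card R)" using fR by (simp add: card_insert_le_m1)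
  hence c: "card ?D \<le> card (col ` V)" using R(3) cx pos by linarith
  have "dominating_set V E ?D" using x R(1) unfolding dominating_set_def by auto
  moreover have "col ` ?D = col ` V" using R(2) x by auto
  ultimately show ?thesis using c lt by (intro exI[of _ ?D]) auto
qed

lemma decomp:
  assumes sg: "simple_graph V E" and cg: "connected_graph V E"
  shows "(\<exists>x\<in>V. \<forall>y\<in>V. y \<noteq> x \<longrightarrow> E x y) \<or>
    (\<exists>u L. u \<in> V \<and> L \<subseteq> V \<and> L \<noteq> {} \<and> u \<notin> L \<and> (\<forall>l\<in>L. E u l) \<and>
      card (V - insert u L) \<ge> 2 \<and> connected_graph (V - insert u L) (restr E (V - insert u L)))"
proof -
  have fin: "finite V" and inV: "\<And>a b. E a b \<Longrightarrow> a \<in> V \<and> b \<in> V"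
    and sym: "\<And>a b. E a b \<Longrightarrow> E b a" using sg unfolding simple_graph_def by auto
  obtain r where r: "r \<in> V" using cg unfolding connected_graph_def by auto
  have reach: "\<exists>k. (E ^^ k) r v" if "v \<in> V" for v
    using cg r that unfolding connected_graph_def rtranclp_power by blast
  define d where "d v = dst E r v" for v
  have pw: "(E ^^ d v) r v" if vV: "v \<in> V" for v
  proof -
    obtain k where "(E ^^ k) r v" using reach[OF vV] by blast
    thus ?thesis using dst_I[where E=E and k=k and r=r and v=v] unfolding d_def by blast
  qed
  have dr: "d r = 0" using dst_I[where E=E and k=0 and r=r and v=r] unfolding d_def by simp
  have d0: "y = r" if "y \<in> V" "d y = 0" for y using dst0 pw that unfolding d_def by metis
  have par: "\<exists>q\<in>V. E q y \<and> d q = j" if "y \<in> V" "d y = Suc j" for y j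
    using dst_parent[OF pw[OF that(1)]] that(2) inV unfolding d_def by blast
  define Dm where "Dm = Max (d ` V)"
  have dle: "d v \<le> Dm" if "v \<in> V" for v using fin that unfolding Dm_def by auto
  obtain v where v: "v \<in> V" "d v = Dm" using fin r unfolding Dm_def
    by (metis (mono_tags, lifting) Max_in empty_iff finite_imageI image_iff)
  show ?thesis
  proof (cases "Dm \<le> 1")
    case True
    have "E r y" if yy: "y \<in> V" "y \<noteq> r" for y
    proof -
      have "d y = Suc 0" using d0 yy dle[OF yy(1)] True by fastforce
      then obtain q where "q \<in> V" "E q y" "d q = 0" using par yy(1) by blast
      thus ?thesis using d0 by blast
    qed
    thus ?thesis using r by blast
  next
    case False
    have Dm2: "Dm \<ge> 2" using False by simp
    obtain u where u: "u \<in> V" "E u v" "d u = Dm - 1" using par[of v "Dm - 1"] v False by auto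
    obtain p where p: "p \<in> V" "E p u" "d p = Dm - 2" 
    proof -
      have "Dm - 1 = Suc (Dm - 2)" using False by simp
      thus ?thesis using par[of u "Dm - 2"] u that by auto
    qed
    define L where "L = {x\<in>V. E u x \<and> d x = Dm}"
    define W where "W = V - insert u L"
    have uL: "u \<notin> L" using u False unfolding L_def by auto
    have vL: "v \<in> L" using u v unfolding L_def by auto
    have rW: "r \<in> W" using r dr u False unfolding W_def L_def by auto
    have pW: "p \<in> W" using p u False unfolding W_def L_def by auto
    have "\<forall>y. y \<in> W \<longrightarrow> d y = k \<longrightarrow> (restr E W)\<^sup>*\<^sup>* y r" for k
    proof (induction k)
      case 0
      then show ?case using d0 unfolding W_def by blast
    next
      case (Suc k)
      show ?case
      proof (intro allI impI)
        fix y assume y: "y \<in> W" "d y = Suc k"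
        obtain q where q: "q \<in> V" "E q y" "d q = k" using par[of y k] y unfolding W_def by auto
        have "q \<noteq> u"
        proof
          assume "q = u"
          hence "d y = Dm" using q u y Dm2 by simp
          thus False using y q \<open>q = u\<close> unfolding W_def L_def by auto
        qed
        moreover have "q \<notin> L" using q y dle[of y] unfolding W_def L_def by auto
        ultimately have qW: "q \<in> W" using q unfolding W_def by auto
        have "restr E W y q" using sym[OF q(2)] qW y unfolding restr_def by auto
        moreover have "(restr E W)\<^sup>*\<^sup>* q r" using Suc qW q(3) by blast
        ultimately show "(restr E W)\<^sup>*\<^sup>* y r"
          by (rule converse_rtranclp_into_rtranclp)
      qed
    qed
    hence conn: "(restr E W)\<^sup>*\<^sup>* y r" if "y \<in> W" for y using that by blast
    show ?thesis
    proof (cases "card W \<ge> 2")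
      case True
      have "connected_graph W (restr E W)"
        unfolding connected_graph_def
      proof (intro conjI ballI)
        show "W \<noteq> {}" using rW by auto
        fix a b assume "a \<in> W" "b \<in> W"
        moreover have "(restr E W)\<^sup>*\<^sup>* r b"
          using rtranclp_sym[of "restr E W", OF _ conn[OF \<open>b \<in> W\<close>]] sym
          unfolding restr_def by blast
        ultimately show "(restr E W)\<^sup>*\<^sup>* a b" using conn by (meson rtranclp_trans)
      qed
      moreover have "L \<subseteq> V" "L \<noteq> {}" "\<forall>l\<in>L. E u l" using vL unfolding L_def by auto
      ultimately show ?thesis using True u(1) uL unfolding W_def by blast
    next
      case False
      have fW: "finite W" using fin unfolding W_def by auto
      have "W = {r}"
      proof (rule ccontr)
        assume "W \<noteq> {r}"
        then obtain z where "z \<in> W" "z \<noteq> r" using rW by auto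
        hence "{r, z} \<subseteq> W" using rW by auto
        hence "card {r, z} \<le> card W" using fW card_mono by blast
        thus False using False \<open>z \<noteq> r\<close> by simp
      qed
      hence "p = r" using pW by auto
      hence "E u r" using p sym by auto
      have "\<forall>y\<in>V. y \<noteq> u \<longrightarrow> E u y"
      proof (intro ballI impI)
        fix y assume "y \<in> V" "y \<noteq> u"
        show "E u y"
        proof (cases "y \<in> L")
          case True thus ?thesis unfolding L_def by auto
        next
          case False
          hence "y \<in> W" using \<open>y \<in> V\<close> \<open>y \<noteq> u\<close> unfolding W_def by auto
          thus ?thesis using \<open>W = {r}\<close> \<open>E u r\<close> by auto
        qed
      qed
      thus ?thesis using u(1) by blast
    qed
  qed
qed

lemma step:
  assumes sg: "simple_graph V E" and u: "u \<in> V" and L: "L \<subseteq> V" "L \<noteq> {}" "u \<notin> L" "\<forall>l\<in>L. E u l"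
    and Wd: "W = V - insert u L" and W2: "card W \<ge> 2" and Wc: "connected_graph W (restr E W)"
    and lt: "card (col ` V) < card V"
    and IH: "card (col ` W) < card W \<Longrightarrow> \<exists>D'. dominating_set W (restr E W) D' \<and> col ` D' = col ` W
               \<and> 2 * card D' + 1 \<le> card W + card (col ` W)"
  shows "\<exists>D. dominating_set V E D \<and> col ` D = col ` V \<and> 2 * card D + 1 \<le> card V + card (col ` V)"
proof -
  have fin: "finite V" and inV: "\<And>a b. E a b \<Longrightarrow> a \<in> V \<and> b \<in> V"
    and sym: "\<And>a b. E a b \<Longrightarrow> E b a" and irr: "\<And>a. \<not> E a a"
    using sg unfolding simple_graph_def by auto
  define S where "S = insert u L"
  have SV: "S \<subseteq> V" using u L unfolding S_def by auto
  have fS: "finite S" using SV fin finite_subset by auto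
  have fL: "finite L" using L(1) fin finite_subset by auto
  have WV: "W \<subseteq> V" using Wd by auto
  have fW: "finite W" using WV fin finite_subset by auto
  have VWS: "V = W \<union> S" using Wd SV unfolding S_def by auto
  have nV: "card V = card W + card S" using Wd SV fS fin unfolding S_def
    by (metis card_Diff_subset card_mono le_add_diff_inverse2)
  have cL: "card L + 1 = card S" using fL L(3) unfolding S_def by simp
  define K where "K = col ` V"
  define K' where "K' = col ` W"
  define M where "M = K - K'"
  have K'K: "K' \<subseteq> K" using WV unfolding K_def K'_def by auto
  have fK: "finite K" using fin unfolding K_def by auto
  have cK: "card K = card K' + card M" unfolding M_def using K'K fK
    by (metis card_Diff_subset card_mono finite_subset le_add_diff_inverse)
  have MS: "M \<subseteq> col ` S" using VWS unfolding M_def K_def K'_def by auto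
  have mS: "card M \<le> card S" using MS fS by (meson card_image_le card_mono finite_imageI le_trans)
  have Msub: "M \<subseteq> col ` V" "M - {col u} \<subseteq> col ` V" unfolding M_def K_def by auto
  have cuK: "col u \<in> K" using u unfolding K_def by auto
  have Dwd: "\<forall>w\<in>W. w \<in> B \<or> (\<exists>y\<in>B. E y w)" if "dominating_set W (restr E W) B" for B
    using that unfolding dominating_set_def restr_def by blast
  obtain B where B: "B \<subseteq> W" "\<forall>w\<in>W. w \<in> B \<or> (\<exists>y\<in>B. E y w)" "col ` B = K'"
    and Balt: "2 * card B + 1 \<le> card W + card K' \<or> (B = W \<and> card W = card K')"
  proof (cases "card K' < card W")
    case True
    then obtain D' where D': "dominating_set W (restr E W) D'" "col ` D' = col ` W"
      "2 * card D' + 1 \<le> card W + card (col ` W)" using IH unfolding K'_def by blast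
    show ?thesis using that[of D'] D' Dwd[OF D'(1)] unfolding K'_def dominating_set_def by blast
  next
    case False
    have "card K' \<le> card W" unfolding K'_def using fW card_image_le by blast
    hence "card W = card K'" using False by simp
    thus ?thesis using that[of W] unfolding K'_def by blast
  qed
  have fB: "finite B" using B(1) fW finite_subset by auto
  have ltn: "card K' + card M < card W + card S" using lt nV cK unfolding K_def by simp
  have domS_u: "\<forall>x\<in>S. x \<in> D \<or> (\<exists>y\<in>D. E y x)" if "u \<in> D" for D
    using that L(4) unfolding S_def by auto
  have domS_L: "\<forall>x\<in>S. x \<in> D \<or> (\<exists>y\<in>D. E y x)" if "L \<subseteq> D" for D
  proof -
    obtain l where "l \<in> L" using L(2) by auto
    hence "E l u" using L(4) sym by auto
    thus ?thesis using that \<open>l \<in> L\<close> unfolding S_def by auto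
  qed
  have mkdom: "dominating_set V E D" if "D \<subseteq> V" "\<forall>w\<in>W. w \<in> D \<or> (\<exists>y\<in>D. E y w)"
      "\<forall>x\<in>S. x \<in> D \<or> (\<exists>y\<in>D. E y x)" for D
    using that VWS unfolding dominating_set_def by blast
  show ?thesis
  proof (cases "col u \<in> M")
    case True
    obtain R where R: "R \<subseteq> V" "col ` R = M - {col u}" "card R \<le> card (M - {col u})"
      using reps[of "M - {col u}" col V, OF _ fin] Msub by blast
    have cR: "card R + 1 \<le> card M" using R(3) True fK unfolding M_def
      by (metis Suc_eq_plus1 card_Diff1_less finite_Diff less_eq_Suc_le order_trans not_less_eq_eq)
    define D where "D = B \<union> insert u R"
    have fR: "finite R" using R(1) fin finite_subset by auto
    have "card D \<le> card B + card (insert u R)" unfolding D_def by (rule card_Un_le)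
    moreover have "card (insert u R) \<le> card R + 1" using fR by (simp add: card_insert_le_m1)
    ultimately have cD: "card D \<le> card B + card M" using cR by linarith
    have "u \<in> D" by (simp add: D_def)
    have "dominating_set V E D"
      by (rule mkdom) (use B(1,2) WV R(1) u domS_u[OF \<open>u \<in> D\<close>] in \<open>auto simp: D_def\<close>)
    moreover have "col ` D = col ` V" using B(3) R(2) True K'K unfolding D_def M_def K_def[symmetric] by auto
    moreover have "2 * card D + 1 \<le> card V + card (col ` V)"
      using Balt cD mS ltn nV cK unfolding K_def[symmetric] by (elim disjE conjE; (hypsubst)?; linarith)
    ultimately show ?thesis by blast
  next
    case False
    hence cuK': "col u \<in> K'" using cuK unfolding M_def by auto
    obtain R where R: "R \<subseteq> V" "col ` R = M" "card R \<le> card M"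
      using reps[of M col V, OF _ fin] Msub by blast
    have fR: "finite R" using R(1) fin finite_subset by auto
    show ?thesis
    proof (cases "2 * card B + 1 \<le> card W + card K'")
      case Bt: True
      show ?thesis
      proof (cases "card M + 2 \<le> card S")
        case True
        define D where "D = B \<union> insert u R"
        have "card D \<le> card B + card (insert u R)" unfolding D_def by (rule card_Un_le)
        moreover have "card (insert u R) \<le> card R + 1" using fR by (simp add: card_insert_le_m1)
        ultimately have cD: "card D \<le> card B + card M + 1" using R(3) by linarith
        have "u \<in> D" by (simp add: D_def)
        have "dominating_set V E D"
          by (rule mkdom) (use B(1,2) WV R(1) u domS_u[OF \<open>u \<in> D\<close>] in \<open>auto simp: D_def\<close>)
        moreover have "col ` D = col ` V" using B(3) R(2) cuK K'K unfolding D_def M_def K_def[symmetric] by auto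
        moreover have "2 * card D + 1 \<le> card V + card (col ` V)"
          using Bt cD True nV cK unfolding K_def[symmetric] by linarith
        ultimately show ?thesis by blast
      next
        case False
        define D where "D = B \<union> L"
        have cD: "card D \<le> card B + card L" unfolding D_def by (rule card_Un_le)
        have "dominating_set V E D"
          by (rule mkdom) (use B(1,2) WV L(1) domS_L[of D] in \<open>auto simp: D_def\<close>)
        moreover have "col ` D = col ` V"
        proof -
          have "M \<subseteq> col ` L" using MS \<open>col u \<notin> M\<close> unfolding S_def by auto
          moreover have "col ` L \<subseteq> K" using L(1) unfolding K_def by auto
          ultimately show ?thesis using B(3) K'K unfolding D_def M_def K_def[symmetric] by auto
        qed
        moreover have "2 * card D + 1 \<le> card V + card (col ` V)"
          using Bt cD False cL nV cK unfolding K_def[symmetric] by linarith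
        ultimately show ?thesis by blast
      qed
    next
      case Bf: False
      hence BW: "B = W" "card W = card K'" using Balt by auto
      obtain x where x: "x \<in> W" "col x = col u" using cuK' unfolding K'_def by auto
      obtain y where "restr E W x y" using neighbour[OF simple_restr[OF sg WV] Wc W2 x(1)] by blast
      hence y: "y \<in> W" "y \<noteq> x" "E y x" using irr sym unfolding restr_def by auto
      define D where "D = (W - {x}) \<union> insert u R"
      have "card D \<le> card (W - {x}) + card (insert u R)" unfolding D_def by (rule card_Un_le)
      moreover have "card (insert u R) \<le> card R + 1" using fR by (simp add: card_insert_le_m1)
      moreover have "card (W - {x}) + 1 = card W" using x(1) fW W2 by simp
      ultimately have cD: "card D \<le> card W + card M" using R(3) by linarith
      have "u \<in> D" by (simp add: D_def)
      have "dominating_set V E D"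
        by (rule mkdom) (use WV R(1) u domS_u[OF \<open>u \<in> D\<close>] y in \<open>auto simp: D_def\<close>)
      moreover have "col ` D = col ` V"
      proof -
        have "col ` D \<subseteq> K" using WV R(2) cuK unfolding D_def M_def K_def by auto
        moreover have "K' \<subseteq> col ` D" using x unfolding K'_def D_def by auto
        moreover have "M \<subseteq> col ` D" using R(2) unfolding D_def by auto
        ultimately show ?thesis unfolding M_def K_def by auto
      qed
      moreover have "2 * card D + 1 \<le> card V + card (col ` V)"
        using BW cD ltn nV cK unfolding K_def[symmetric] by linarith
      ultimately show ?thesis by blast
    qed
  qed
qed

lemma main:
  "simple_graph V E \<Longrightarrow> connected_graph V E \<Longrightarrow> card (col ` V) < card V \<Longrightarrow>
   \<exists>D. dominating_set V E D \<and> col ` D = col ` V \<and> 2 * card D + 1 \<le> card V + card (col ` V)"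
proof (induction "card V" arbitrary: V E rule: less_induct)
  case less
  from decomp[OF less.prems(1,2)] show ?case
  proof (elim disjE exE conjE bexE)
    fix x assume x: "x \<in> V" "\<forall>y\<in>V. y \<noteq> x \<longrightarrow> E x y"
    show ?case by (rule star_case[OF less.prems(1) x less.prems(3)])
  next
    fix u L assume a: "u \<in> V" "L \<subseteq> V" "L \<noteq> {}" "u \<notin> L" "\<forall>l\<in>L. E u l"
      "2 \<le> card (V - insert u L)" "connected_graph (V - insert u L) (restr E (V - insert u L))"
    have fin: "finite V" using less.prems(1) simple_graph_def by auto
    have lt: "card (V - insert u L) < card V" by (rule psubset_card_mono[OF fin]) (use a(1) in auto)
    have sr: "simple_graph (V - insert u L) (restr E (V - insert u L))"
      by (rule simple_restr[OF less.prems(1)]) auto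
    show ?case
      by (rule step[OF less.prems(1) a(1-5) refl a(6) a(7) less.prems(3)])
         (rule less.hyps[OF lt sr a(7)])
  qed
qed

theorem mainTheorem4:
  fixes V :: "'a set" and E :: "'a \<Rightarrow> 'a \<Rightarrow> bool" and col :: "'a \<Rightarrow> nat"
    and n c :: nat
  assumes "simple_graph V E"
    and "connected_graph V E"
    and "vertex_colouring V col c"
    and "card V = n"
    and "n > c" and "c \<ge> 1"
  shows "real (tropical_domination_number V E col c) \<le> (real n + real c - 1) / 2"
proof -
  have cV: "col ` V = {1..c}" using assms(3) unfolding vertex_colouring_def by simp
  hence "card (col ` V) < card V" using assms(4,5) by simp
  then obtain D where D: "dominating_set V E D" "col ` D = col ` V" "2 * card D + 1 \<le> card V + card (col ` V)"
    using main[OF assms(1,2)] by blast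
  have "tropical_dominating_set V E col c D" using D cV unfolding tropical_dominating_set_def by simp
  hence "tropical_domination_number V E col c \<le> card D"
    unfolding tropical_domination_number_def by (metis (mono_tags, lifting) Least_le)
  moreover have "2 * card D + 1 \<le> n + c" using D(3) cV assms(4) by simp
  ultimately have "2 * tropical_domination_number V E col c + 1 \<le> n + c" by linarith
  hence "2 * real (tropical_domination_number V E col c) + 1 \<le> real n + real c" by linarith
  thus ?thesis by (simp add: field_simps)
qed

end
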